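(* For an integer $p\ge 0$ and a complex number $z$ with $0<|z|<1$, let $$F(z,p)=\sum_{k=1}^\infty \frac{z^{2k}}{(2k-1)(2k)^p(2k+1)}.$$ Then, if $p$ is even, $$F(z,p)=\frac12\left(\Big(z-\frac1z\Big)\operatorname{arctanh}(z)+1-\sum_{j=1}^{p/2}2^{-(2j-1)}\operatorname{Li}_{2j}(z^2)\right),$$ and, if $p$ is odd, $$F(z,p)=\frac12\left(\Big(z+\frac1z\Big)\operatorname{arctanh}(z)-1+\ln(1-z^2)-\sum_{j=1}^{(p-1)/2}2^{-2j}\operatorname{Li}_{2j+1}(z^2)\right).$$ (Empty sums are $0$.)
   Context: $\operatorname{arctanh}(z)=\int_0^z\frac{dt}{1-t^2}=\frac12\ln\frac{1+z}{1-z}=\sum_{k\ge1}\frac{z^{2k-1}}{2k-1}$ for $|z|<1$ (principal branch of $\ln$). The polylogarithm is $\operatorname{Li}_n(z)=\sum_{k=1}^\infty z^k/k^n$ for $|z|<1$. *)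

theory Defs
  imports "HOL-Analysis.Analysis"
begin

text \<open>Polylogarithm, defined by its power series (meaningful for norm z < 1).\<close>
definition polylog :: "nat \<Rightarrow> complex \<Rightarrow> complex" where
  "polylog n z = (\<Sum>k. z ^ (Suc k) / of_nat (Suc k) ^ n)"

definition F :: "complex \<Rightarrow> nat \<Rightarrow> complex" where
  "F z p = (\<Sum>k. z ^ (2 * Suc k) /
      (of_nat (2 * Suc k - 1) * of_nat (2 * Suc k) ^ p * of_nat (2 * Suc k + 1)))"

end

theory Submission
  imports Defs
begin

lemma summ_aux:
  fixes z :: complex and f :: "nat \<Rightarrow> complex"
  assumes "norm z < 1" "\<And>k. norm (f k) \<le> norm z ^ (2*k)"
  shows "summable f"
proof -
  have r: "norm (norm z ^ 2) < 1"
  proof -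
    have "norm z ^ 2 < 1 ^ 2" by (rule power_strict_mono) (use assms(1) in auto)
    then show ?thesis by simp
  qed
  have g: "summable (\<lambda>n. (norm z ^ 2) ^ n)" by (rule summable_geometric[OF r])
  have h: "norm (f n) \<le> (norm z ^ 2) ^ n" for n
  proof -
    have "norm (f n) \<le> norm z ^ (2*n)" by (rule assms(2))
    also have "\<dots> = (norm z ^ 2) ^ n" by (rule power_mult)
    finally show ?thesis .
  qed
  show ?thesis by (rule summable_comparison_test'[OF g h])
qed

lemma artanh_series:
  fixes z :: complex
  assumes "norm z < 1"
  shows "(\<lambda>k. z^(2*k+1) / of_nat (2*k+1)) sums artanh z"
proof -
  let ?A = "\<lambda>k. z^(2*k+1) / of_nat (2*k+1)"
  have 1: "(\<lambda>n. - ((-z)^n) / of_nat n) sums ln (1 + z)" using Ln_series'[OF assms] .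
  have 2: "(\<lambda>n. - ((z)^n) / of_nat n) sums ln (1 - z)" using Ln_series'[of "-z"] assms by simp
  have 3: "(\<lambda>n. (z^n - (-z)^n) / of_nat n / 2) sums ((ln (1 + z) - ln (1 - z)) / 2)"
    using sums_divide[OF sums_diff[OF 1 2], of 2] by (simp add: diff_divide_distrib)
  have 4: "(\<lambda>k. (\<lambda>n. (z^n - (-z)^n) / of_nat n / 2) (2*k+1)) sums ((ln (1 + z) - ln (1 - z)) / 2)"
  proof (subst sums_mono_reindex)
    show "strict_mono (\<lambda>k::nat. 2*k+1)" by (rule strict_monoI) simp
    fix n :: nat assume nr: "n \<notin> range (\<lambda>k::nat. 2*k+1)"
    have "even n"
    proof (rule ccontr)
      assume "odd n"
      then obtain k where "n = 2*k+1" by (rule oddE)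
      then show False using nr by blast
    qed
    then show "(z^n - (-z)^n) / of_nat n / 2 = 0" by (simp add: power_minus_even)
  qed (rule 3)
  have eq: "(\<lambda>k. (\<lambda>n. (z^n - (-z)^n) / of_nat n / 2) (2*k+1)) = ?A"
  proof (rule ext)
    fix k :: nat
    have h: "(w - - w) / d / 2 = w / d" for w d :: complex by simp
    have "(-z)^(2*k+1) = - (z^(2*k+1))" by (rule power_minus_odd) simp
    then show "(\<lambda>n. (z^n - (-z)^n) / of_nat n / 2) (2*k+1) = ?A k" by (simp only: h)
  qed
  have "?A sums ((ln (1 + z) - ln (1 - z)) / 2)" using 4 eq by simp
  moreover have "ln ((1 + z) / (1 - z)) = ln (1 + z) - ln (1 - z)"
  proof -
    have r1: "0 < Re (1 + z)" "0 < Re (1 - z)" using assms abs_Re_le_cmod[of z] by auto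
    have zz: "z \<noteq> -1" "z \<noteq> 1" using assms by auto
    have n1: "1 + z \<noteq> 0" "1 - z \<noteq> 0"
    proof -
      show "1 + z \<noteq> 0" using zz(1) by (metis add.commute add_eq_0_iff)
      show "1 - z \<noteq> 0" using zz(2) by simp
    qed
    have "ln ((1 + z) / (1 - z)) = ln ((1 + z) * inverse (1 - z))" by (simp add: divide_inverse)
    also have "\<dots> = ln (1 + z) + ln (inverse (1 - z))"
    proof (rule Ln_times_simple)
      have a: "\<bar>Im (Ln (1+z))\<bar> < pi/2" "\<bar>Im (Ln (1-z))\<bar> < pi/2" using Re_Ln_pos_lt_imp r1 by auto
      have b: "Ln (inverse (1-z)) = - Ln (1-z)"
        by (rule Ln_inverse) (use r1 in \<open>auto simp: complex_nonpos_Reals_iff\<close>)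
      show "- pi < Im (Ln (1 + z)) + Im (Ln (inverse (1 - z)))"
           "Im (Ln (1 + z)) + Im (Ln (inverse (1 - z))) \<le> pi" using a b by auto
    qed (use n1 in auto)
    also have "ln (inverse (1 - z)) = - ln (1 - z)"
      by (rule Ln_inverse) (use r1 in \<open>auto simp: complex_nonpos_Reals_iff\<close>)
    finally show ?thesis by simp
  qed
  ultimately show ?thesis by (simp add: artanh_def)
qed

lemma zsq: "((z::complex)^2)^(Suc k) = z^(2*k+2)"
proof -
  have "(z^2)^(Suc k) = z^(2*Suc k)" by (rule power_mult[symmetric])
  also have "2 * Suc k = 2*k+2" by simp
  finally show ?thesis .
qed

lemma ln_series2:
  fixes z :: complex
  assumes "norm z < 1"
  shows "(\<lambda>k. z^(2*k+2) / of_nat (2*k+2)) sums (- ln (1 - z^2) / 2)"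
proof -
  have n2: "norm (- (z^2)) < 1" using assms by (simp add: norm_power abs_square_less_1)
  have L: "(\<lambda>n. - ((-(-(z^2)))^n) / of_nat n) sums ln (1 + - (z^2))" using Ln_series'[OF n2] .
  have e0: "1 + - (z^2) = 1 - z^2" "-(-(z^2)) = z^2" by simp_all
  define f where "f = (\<lambda>n. - ((z^2)^n) / (of_nat n :: complex))"
  have fs: "f sums ln (1 - z^2)" using L unfolding e0 f_def .
  have f0: "f 0 = 0" unfolding f_def by simp
  have "f sums (ln (1 - z^2) + f 0)" unfolding f0 add_0_right by (rule fs)
  then have "(\<lambda>n. f (Suc n)) sums ln (1 - z^2)" by (simp only: sums_Suc_iff)
  then have "(\<lambda>n. - ((z^2)^(Suc n)) / of_nat (Suc n)) sums ln (1 - z^2)" unfolding f_def .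
  then have S: "(\<lambda>n. - ((z^2)^(Suc n)) / of_nat (Suc n) / (-2)) sums (ln (1 - z^2) / (-2))"
    by (rule sums_divide)
  have E: "(\<lambda>n. - ((z^2)^(Suc n)) / of_nat (Suc n) / (-2)) = (\<lambda>k. z^(2*k+2) / of_nat (2*k+2))"
  proof
    fix n :: nat
    have o: "(of_nat (2*n+2) :: complex) = of_nat (Suc n) * 2" by simp
    have "- ((z^2)^(Suc n)) / of_nat (Suc n) / (-2) = z^(2*n+2) / (of_nat (Suc n) * 2)"
      unfolding zsq by (simp add: divide_divide_eq_left)
    then show "- ((z^2)^(Suc n)) / of_nat (Suc n) / (-2) = z^(2*n+2) / of_nat (2*n+2)"
      unfolding o .
  qed
  have R: "ln (1 - z^2) / (-2) = - ln (1 - z^2) / 2" by (simp only: divide_minus_right minus_divide_left)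
  show ?thesis using S unfolding E R .
qed

lemma norm_div_nat_le:
  fixes w :: complex
  assumes "d > 0"
  shows "norm (w / of_nat d) \<le> norm w"
proof -
  have "norm (w / of_nat d) = norm w / real d" by (simp add: norm_divide)
  also have "\<dots> \<le> norm w / 1" by (rule divide_left_mono) (use assms in auto)
  finally show ?thesis by simp
qed

definition T :: "complex \<Rightarrow> nat \<Rightarrow> nat \<Rightarrow> complex" where
  "T z p k = z^(2*k+2) / (of_nat (2*k+1) * of_nat (2*k+2) ^ p * of_nat (2*k+3))"

lemma F_T: "F z p = (\<Sum>k. T z p k)"
proof -
  have "\<And>k. 2 * Suc k - 1 = 2*k+1" "\<And>k. 2 * Suc k = 2*k+2" "\<And>k. 2 * Suc k + 1 = 2*k+3" by auto
  then show ?thesis unfolding F_def T_def by (simp only:)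
qed

lemma T_summable:
  fixes z :: complex
  assumes "norm z < 1"
  shows "summable (T z p)"
proof (rule summ_aux[OF assms])
  fix k
  have "T z p k = z^(2*k+2) / of_nat ((2*k+1) * (2*k+2) ^ p * (2*k+3))"
    unfolding T_def by (simp only: of_nat_mult of_nat_power)
  then have "norm (T z p k) \<le> norm (z^(2*k+2))"
    by (simp only:) (rule norm_div_nat_le, simp)
  also have "\<dots> = norm z ^ (2*k+2)" by (rule norm_power)
  also have "\<dots> \<le> norm z ^ (2*k)" by (rule power_decreasing) (use assms in auto)
  finally show "norm (T z p k) \<le> norm z ^ (2*k)" .
qed

definition P :: "complex \<Rightarrow> nat \<Rightarrow> nat \<Rightarrow> complex" where
  "P z m k = (z^2)^(Suc k) / of_nat (Suc k) ^ m"

lemma P_summable: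
  fixes z :: complex
  assumes "norm z < 1"
  shows "summable (P z m)"
proof (rule summ_aux[OF assms])
  fix k
  have "P z m k = z^(2*k+2) / of_nat (Suc k ^ m)"
    unfolding P_def zsq by (simp only: of_nat_power)
  then have "norm (P z m k) \<le> norm (z^(2*k+2))"
    by (simp only:) (rule norm_div_nat_le, simp)
  also have "\<dots> = norm z ^ (2*k+2)" by (rule norm_power)
  also have "\<dots> \<le> norm z ^ (2*k)" by (rule power_decreasing) (use assms in auto)
  finally show "norm (P z m k) \<le> norm z ^ (2*k)" .
qed

lemma T_rec: "T z (p+2) k = T z p k - P z (p+2) k / 2^(p+2)"
proof -
  define a :: complex where "a = of_nat (2*k+1)"
  define b :: complex where "b = of_nat (2*k+2)"
  define c :: complex where "c = of_nat (2*k+3)"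
  have nz: "a \<noteq> 0" "b \<noteq> 0" "c \<noteq> 0" unfolding a_def b_def c_def by (simp_all only: of_nat_eq_0_iff)
  have ac: "a * c = b^2 - 1" unfolding a_def b_def c_def by (simp add: algebra_simps power2_eq_square)
  have Pe: "P z (p+2) k / 2^(p+2) = z^(2*k+2) / b^(p+2)"
  proof -
    have "b = 2 * of_nat (Suc k)" unfolding b_def by simp
    then have hb: "b^(p+2) = 2^(p+2) * of_nat (Suc k)^(p+2)" by (simp only: power_mult_distrib)
    have "P z (p+2) k / 2^(p+2) = z^(2*k+2) / (of_nat (Suc k)^(p+2) * 2^(p+2))"
      unfolding P_def zsq by (rule divide_divide_eq_left)
    also have "\<dots> = z^(2*k+2) / b^(p+2)" unfolding hb by (simp only: mult.commute)
    finally show ?thesis .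
  qed
  have "T z (p+2) k = z^(2*k+2) / (a * b^(p+2) * c)" unfolding T_def a_def b_def c_def ..
  also have "\<dots> = z^(2*k+2) / (a * b^p * c) - z^(2*k+2) / b^(p+2)"
  proof -
    have "z^(2*k+2) / (a * b^(p+2) * c) = z^(2*k+2) * (b^2 - a*c) / (a * b^(p+2) * c)" using ac by simp
    also have "\<dots> = z^(2*k+2) / (a * b^p * c) - z^(2*k+2) / b^(p+2)"
    proof -
      have d1: "a * b^(p+2) * c = (a*b^p*c) * b^2" by (simp only: power_add mult_ac)
      have d2: "a * b^(p+2) * c = b^(p+2) * (a*c)" by (simp add: mult_ac)
      have e1: "z^(2*k+2) * b^2 / (a * b^(p+2) * c) = z^(2*k+2) / (a * b^p * c)"
        unfolding d1 by (rule nonzero_mult_divide_mult_cancel_right) (use nz in simp)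
      have e2: "z^(2*k+2) * (a*c) / (a * b^(p+2) * c) = z^(2*k+2) / b^(p+2)"
        unfolding d2 by (rule nonzero_mult_divide_mult_cancel_right) (use nz in simp)
      show ?thesis unfolding right_diff_distrib diff_divide_distrib e1 e2 ..
    qed
    finally show ?thesis .
  qed
  also have "\<dots> = T z p k - P z (p+2) k / 2^(p+2)" unfolding Pe T_def a_def b_def c_def ..
  finally show ?thesis .
qed

lemma F_rec:
  fixes z :: complex
  assumes "norm z < 1"
  shows "F z (p+2) = F z p - polylog (p+2) (z^2) / 2^(p+2)"
proof -
  have pl: "polylog (p+2) (z^2) = (\<Sum>k. P z (p+2) k)" unfolding polylog_def P_def ..
  have "F z (p+2) = (\<Sum>k. T z p k - P z (p+2) k / 2^(p+2))" unfolding F_T T_rec ..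
  also have "\<dots> = (\<Sum>k. T z p k) - (\<Sum>k. P z (p+2) k / 2^(p+2))"
    by (rule suminf_diff[OF T_summable[OF assms] summable_divide[OF P_summable[OF assms]], symmetric])
  also have "(\<Sum>k. P z (p+2) k / 2^(p+2)) = (\<Sum>k. P z (p+2) k) / 2^(p+2)"
    by (rule suminf_divide[OF P_summable[OF assms]])
  finally show ?thesis unfolding F_T pl .
qed

lemma alg0:
  fixes W a c :: complex
  assumes "a \<noteq> 0" "c \<noteq> 0" "c = a + 2"
  shows "W / (a * c) = (W / a - W / c) / 2"
proof -
  have "W / a - W / c = W * (c - a) / (a * c)" using assms(1,2) by (simp add: field_simps)
  also have "c - a = 2" using assms(3) by simp
  finally show ?thesis by simp
qed

lemma alg1:
  fixes W a b c :: complex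
  assumes "a \<noteq> 0" "b \<noteq> 0" "c \<noteq> 0" "b = a + 1" "c = a + 2"
  shows "W / (a * b * c) = (W / a - 2 * W / b + W / c) / 2"
proof -
  have "W / a - 2 * W / b + W / c = W * (b * c - 2 * a * c + a * b) / (a * b * c)"
    using assms(1-3) by (simp add: field_simps)
  also have "b * c - 2 * a * c + a * b = 2" using assms(4,5) by (simp add: algebra_simps)
  finally show ?thesis by simp
qed

lemma A_sums:
  fixes z :: complex
  assumes "norm z < 1"
  shows "(\<lambda>k. z^(2*Suc k+1) / of_nat (2*Suc k+1)) sums (artanh z - z)"
proof -
  define f where "f = (\<lambda>k. z^(2*k+1) / (of_nat (2*k+1) :: complex))"
  have f0: "f 0 = z" unfolding f_def by simp
  have "f sums artanh z" unfolding f_def by (rule artanh_series[OF assms])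
  then have "f sums (artanh z - z + f 0)" unfolding f0 by simp
  then have "(\<lambda>k. f (Suc k)) sums (artanh z - z)" by (simp only: sums_Suc_iff)
  then show ?thesis unfolding f_def .
qed

lemma F0:
  fixes z :: complex
  assumes "norm z < 1" "z \<noteq> 0"
  shows "F z 0 = ((z - 1 / z) * artanh z + 1) / 2"
proof -
  have eq: "T z 0 = (\<lambda>k. (z * (z^(2*k+1) / of_nat (2*k+1)) - (z^(2*Suc k+1) / of_nat (2*Suc k+1)) / z) / 2)"
  proof
    fix k :: nat
    define a :: complex where "a = of_nat (2*k+1)"
    define c :: complex where "c = of_nat (2*k+3)"
    have nz: "a \<noteq> 0" "c \<noteq> 0" unfolding a_def c_def by (simp_all only: of_nat_eq_0_iff)
    have ca: "c = a + 2" unfolding a_def c_def by simp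
    have w1: "z * z^(2*k+1) = z^(2*k+2)" by simp
    have w2: "z^(2*Suc k+1) / z = z^(2*k+2)" using assms(2) by simp
    have cc: "(of_nat (2*Suc k+1) :: complex) = c" unfolding c_def by simp
    have "T z 0 k = z^(2*k+2) / (a * c)" unfolding T_def a_def c_def by simp
    also have "\<dots> = (z^(2*k+2) / a - z^(2*k+2) / c) / 2" by (rule alg0[OF nz ca])
    also have "\<dots> = (z * (z^(2*k+1) / a) - (z^(2*Suc k+1) / c) / z) / 2"
      using assms(2) by (simp add: w1[symmetric] w2[symmetric] divide_divide_eq_left mult.commute)
    finally show "T z 0 k = (z * (z^(2*k+1) / of_nat (2*k+1)) - (z^(2*Suc k+1) / of_nat (2*Suc k+1)) / z) / 2"
      unfolding a_def cc .
  qed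
  have "T z 0 sums ((z * artanh z - (artanh z - z) / z) / 2)"
    unfolding eq
    by (intro sums_divide sums_diff sums_mult artanh_series A_sums assms(1))
  then have "F z 0 = (z * artanh z - (artanh z - z) / z) / 2" unfolding F_T by (rule sums_unique[symmetric])
  also have "z * artanh z - (artanh z - z) / z = (z - 1 / z) * artanh z + 1"
    using assms(2) by (simp add: field_simps)
  finally show ?thesis .
qed

lemma F1:
  fixes z :: complex
  assumes "norm z < 1" "z \<noteq> 0"
  shows "F z 1 = ((z + 1 / z) * artanh z - 1 + ln (1 - z^2)) / 2"
proof -
  have eq: "T z 1 = (\<lambda>k. (z * (z^(2*k+1) / of_nat (2*k+1)) - 2 * (z^(2*k+2) / of_nat (2*k+2))
                         + (z^(2*Suc k+1) / of_nat (2*Suc k+1)) / z) / 2)"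
  proof
    fix k :: nat
    define a :: complex where "a = of_nat (2*k+1)"
    define b :: complex where "b = of_nat (2*k+2)"
    define c :: complex where "c = of_nat (2*k+3)"
    have nz: "a \<noteq> 0" "b \<noteq> 0" "c \<noteq> 0" unfolding a_def b_def c_def by (simp_all only: of_nat_eq_0_iff)
    have ba: "b = a + 1" unfolding a_def b_def by simp
    have ca: "c = a + 2" unfolding a_def c_def by simp
    have w1: "z * z^(2*k+1) = z^(2*k+2)" by simp
    have w2: "z^(2*Suc k+1) / z = z^(2*k+2)" using assms(2) by simp
    have cc: "(of_nat (2*Suc k+1) :: complex) = c" unfolding c_def by simp
    have "T z 1 k = z^(2*k+2) / (a * b * c)" unfolding T_def a_def b_def c_def by simp
    also have "\<dots> = (z^(2*k+2) / a - 2 * z^(2*k+2) / b + z^(2*k+2) / c) / 2" by (rule alg1[OF nz ba ca])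
    also have "\<dots> = (z * (z^(2*k+1) / a) - 2 * (z^(2*k+2) / b) + (z^(2*Suc k+1) / c) / z) / 2"
      using assms(2) by (simp add: w1[symmetric] w2[symmetric] divide_divide_eq_left mult.commute)
    finally show "T z 1 k = (z * (z^(2*k+1) / of_nat (2*k+1)) - 2 * (z^(2*k+2) / of_nat (2*k+2))
                         + (z^(2*Suc k+1) / of_nat (2*Suc k+1)) / z) / 2"
      unfolding a_def b_def cc .
  qed
  define L where "L = ln (1 - z^2)"
  have B: "(\<lambda>k. z^(2*k+2) / of_nat (2*k+2)) sums (- L / 2)" unfolding L_def by (rule ln_series2[OF assms(1)])
  have "T z 1 sums ((z * artanh z - 2 * (- L / 2) + (artanh z - z) / z) / 2)"
    unfolding eq
    by (intro sums_divide sums_diff sums_add sums_mult artanh_series A_sums B assms(1))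
  then have "F z 1 = (z * artanh z - 2 * (- L / 2) + (artanh z - z) / z) / 2" unfolding F_T by (rule sums_unique[symmetric])
  also have "z * artanh z - 2 * (- L / 2) + (artanh z - z) / z = (z + 1 / z) * artanh z - 1 + L"
    using assms(2) by (simp add: field_simps)
  finally show ?thesis unfolding L_def .
qed

lemma F_even:
  fixes z :: complex
  assumes "norm z < 1" "z \<noteq> 0"
  shows "F z (2*m) = ((z - 1 / z) * artanh z + 1
                    - (\<Sum>j=1..m. polylog (2 * j) (z\<^sup>2) / 2 ^ (2 * j - 1))) / 2"
proof (induction m)
  case 0
  then show ?case using F0[OF assms] by simp
next
  case (Suc m)
  define X where "X = (z - 1 / z) * artanh z + 1"
  define S where "S = (\<Sum>j=1..m. polylog (2 * j) (z\<^sup>2) / 2 ^ (2 * j - 1))"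
  define Q where "Q = polylog (2*m+2) (z^2)"
  have s: "(\<Sum>j=1..Suc m. polylog (2 * j) (z\<^sup>2) / 2 ^ (2 * j - 1)) = S + Q / 2^(2*m+1)"
    unfolding S_def Q_def by (simp add: sum.cl_ivl_Suc)
  have "F z (2 * Suc m) = F z (2*m + 2) - 0" by simp
  also have "F z (2*m + 2) = F z (2*m) - Q / 2^(2*m+2)" unfolding Q_def by (rule F_rec[OF assms(1)])
  also have "F z (2*m) = (X - S) / 2" unfolding X_def S_def by (rule Suc.IH)
  finally have "F z (2 * Suc m) = (X - S) / 2 - Q / 2^(2*m+2)" by simp
  also have "\<dots> = (X - (S + Q / 2^(2*m+1))) / 2" by (simp add: field_simps)
  finally show ?case unfolding s X_def .
qed

lemma F_odd:
  fixes z :: complex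
  assumes "norm z < 1" "z \<noteq> 0" "L = ln (1 - z\<^sup>2)"
  shows "F z (2*m+1) = ((z + 1 / z) * artanh z - 1 + L
                    - (\<Sum>j=1..m. polylog (2 * j + 1) (z\<^sup>2) / 2 ^ (2 * j))) / 2"
proof (induction m)
  case 0
  have "F z 1 = ((z + 1 / z) * artanh z - 1 + L) / 2" using F1[OF assms(1,2)] unfolding assms(3) .
  then show ?case by simp
next
  case (Suc m)
  define X where "X = (z + 1 / z) * artanh z - 1 + L"
  define S where "S = (\<Sum>j=1..m. polylog (2 * j + 1) (z\<^sup>2) / 2 ^ (2 * j))"
  define Q where "Q = polylog (2*m+3) (z^2)"
  have e3: "2 * m + 3 = Suc (Suc (Suc (2 * m)))" by simp
  have s: "(\<Sum>j=1..Suc m. polylog (2 * j + 1) (z\<^sup>2) / 2 ^ (2 * j)) = S + Q / 2^(2*m+2)"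
    unfolding S_def Q_def e3 by (simp add: sum.cl_ivl_Suc)
  have "F z (2 * Suc m + 1) = F z ((2*m + 1) + 2) - 0" by simp
  also have "F z ((2*m + 1) + 2) = F z (2*m+1) - Q / 2^(2*m+3)" unfolding Q_def
  proof -
    have e: "2*m+1+2 = 2*m+3" by simp
    show "F z (2*m+1+2) = F z (2*m+1) - polylog (2*m+3) (z^2) / 2^(2*m+3)"
      using F_rec[OF assms(1), of "2*m+1"] unfolding e .
  qed
  also have "F z (2*m+1) = (X - S) / 2" unfolding X_def S_def by (rule Suc.IH)
  finally have "F z (2 * Suc m + 1) = (X - S) / 2 - Q / 2^(2*m+3)" by simp
  also have "\<dots> = (X - (S + Q / 2^(2*m+2))) / 2" by (simp add: field_simps power_add)
  finally show ?case unfolding s X_def .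
qed

theorem theorem1:
  fixes z :: complex and p :: nat
  assumes "0 < norm z" and "norm z < 1"
  shows "(even p \<longrightarrow>
           F z p = ((z - 1 / z) * artanh z + 1
                    - (\<Sum>j=1..p div 2. polylog (2 * j) (z\<^sup>2) / 2 ^ (2 * j - 1))) / 2)
       \<and> (odd p \<longrightarrow>
           F z p = ((z + 1 / z) * artanh z - 1 + ln (1 - z\<^sup>2)
                    - (\<Sum>j=1..(p - 1) div 2. polylog (2 * j + 1) (z\<^sup>2) / 2 ^ (2 * j))) / 2)"
proof (intro conjI impI)
  have z0: "z \<noteq> 0" using assms(1) by auto
  assume "even p"
  then obtain m where pm: "p = 2 * m" by (rule evenE)
  have "p div 2 = m" using pm by simp
  then show "F z p = ((z - 1 / z) * artanh z + 1
                    - (\<Sum>j=1..p div 2. polylog (2 * j) (z\<^sup>2) / 2 ^ (2 * j - 1))) / 2"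
    using F_even[OF assms(2) z0, of m] unfolding pm by simp
next
  have z0: "z \<noteq> 0" using assms(1) by auto
  assume "odd p"
  define L where "L = ln (1 - z\<^sup>2)"
  from \<open>odd p\<close> obtain m where pm: "p = 2 * m + 1" by (rule oddE)
  have "(p - 1) div 2 = m" using pm by simp
  then show "F z p = ((z + 1 / z) * artanh z - 1 + ln (1 - z\<^sup>2)
                    - (\<Sum>j=1..(p - 1) div 2. polylog (2 * j + 1) (z\<^sup>2) / 2 ^ (2 * j))) / 2"
    using F_odd[OF assms(2) z0 L_def, of m] unfolding pm L_def[symmetric] by simp
qed

end
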